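(* Let $N\ge 4$ and $M\ge 1$ be integers, let $\mathcal I_N=\{(i,j): i,j\in\{1,\dots,N\},\ i\neq j\}$, and for each dyad $(i,j)\in\mathcal I_N$ let $Y_{ij}\in\{0,1,\dots,M\}$ be an ordered outcome and $X_{ij}\in\mathbb R^k$ a covariate vector. Suppose that, conditional on all covariates $\mathbf X=(X_{ij})_{(i,j)\in\mathcal I_N}$ and all fixed effects $\mathbf F$ (consisting of real numbers $\lambda_{im},\delta_{im}$ for $i=1,\dots,N$, $m=1,\dots,M$), the outcomes $Y_{ij}$ are independent across dyads with \[ P(Y_{ij}=m\mid X_{ij},F_i,F_j)=\begin{cases}1-\Lambda(X_{ij}'\beta_0-\lambda_{i1}-\delta_{j1}), & m=0,\\ \Lambda(X_{ij}'\beta_0-\lambda_{im}-\delta_{jm})-\Lambda(X_{ij}'\beta_0-\lambda_{i,m+1}-\delta_{j,m+1}), & 1\le m\le M-1,\\ \Lambda(X_{ij}'\beta_0-\lambda_{iM}-\delta_{jM}), & m=M,\end{cases} \] where $\Lambda(z)=e^z/(1+e^z)$ and $\beta_0\in\mathbb R^k$. For $m\in\{1,\dots,M\}$ let $D_{ij}(m)=\mathbf 1\{Y_{ij}\ge m\}$. For a tetrad $\sigma=(i_1,i_2,j_1,j_2)$ of four distinct nodes, define \[ \overline Z_\sigma(m)=\tfrac12\Big((D_{i_1j_1}(m)-D_{i_1j_2}(m))-(D_{i_2j_1}(m)-D_{i_2j_2}(m))\Big), \] $X_\sigma=(X_{i_1j_1},X_{i_1j_2},X_{i_2j_1},X_{i_2j_2})$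 and $r_\sigma=(X_{i_1j_1}-X_{i_1j_2})-(X_{i_2j_1}-X_{i_2j_2})$. Then for any tetrad $\sigma$ and any cutoff $m\in\{1,\dots,M\}$, \[ P\big(\overline Z_\sigma(m)=1\mid \overline Z_\sigma(m)\in\{-1,+1\},X_\sigma\big)=\Lambda(r_\sigma'\beta_0). \]
   Context: The thresholds are assumed ordered in the sense that $\lambda_{im'}+\delta_{jm'}\ge \lambda_{im}+\delta_{jm}$ whenever $m'\ge m$, so that the displayed probabilities are valid. $F_i=((\lambda_{im},\delta_{im}):m=1,\dots,M)$ collects the fixed effects of node $i$ (sender effects $\lambda_{im}$ and receiver effects $\delta_{im}$). *)

theory Defs
  imports "HOL-Probability.Probability"
begin

definition logistic :: "real \<Rightarrow> real" where
  "logistic z = exp z / (1 + exp z)"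

text \<open>Ordered-logit probability of outcome m for dyad (i,j), given index c = X_ij'beta0,
  sender effects lam i m and receiver effects del j m, with M cutoffs.\<close>
definition ologit_prob ::
  "nat \<Rightarrow> real \<Rightarrow> (nat \<Rightarrow> nat \<Rightarrow> real) \<Rightarrow> (nat \<Rightarrow> nat \<Rightarrow> real) \<Rightarrow> nat \<Rightarrow> nat \<Rightarrow> nat \<Rightarrow> real" where
  "ologit_prob M c lam del i j m =
     (if m = 0 then 1 - logistic (c - lam i 1 - del j 1)
      else if m = M then logistic (c - lam i M - del j M)
      else logistic (c - lam i m - del j m) - logistic (c - lam i (m+1) - del j (m+1)))"

definition dyads :: "nat \<Rightarrow> (nat \<times> nat) set" where
  "dyads N = {(i,j). i \<in> {1..N} \<and> j \<in> {1..N} \<and> i \<noteq> j}"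

definition Dind :: "(nat \<Rightarrow> nat \<Rightarrow> 'w \<Rightarrow> nat) \<Rightarrow> nat \<Rightarrow> nat \<Rightarrow> nat \<Rightarrow> 'w \<Rightarrow> real" where
  "Dind Y i j m \<omega> = (if Y i j \<omega> \<ge> m then 1 else 0)"

definition Zbar :: "(nat \<Rightarrow> nat \<Rightarrow> 'w \<Rightarrow> nat) \<Rightarrow> nat \<Rightarrow> nat \<Rightarrow> nat \<Rightarrow> nat \<Rightarrow> nat \<Rightarrow> 'w \<Rightarrow> real" where
  "Zbar Y i1 i2 j1 j2 m \<omega> =
     (1/2) * ((Dind Y i1 j1 m \<omega> - Dind Y i1 j2 m \<omega>) - (Dind Y i2 j1 m \<omega> - Dind Y i2 j2 m \<omega>))"

end

theory Submission imports Defs begin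

lemma logistic_alg:
  "logistic a * (1 - logistic b) * (1 - logistic c) * logistic d /
   (logistic a * (1 - logistic b) * (1 - logistic c) * logistic d +
    (1 - logistic a) * logistic b * logistic c * (1 - logistic d)) = logistic (a - b - c + d)"
proof -
  have pos: "0 < 1 + exp x" for x :: real using exp_gt_zero[of x] by linarith
  have q: "1 - logistic x = 1 / (1 + exp x)" for x :: real
  proof -
    have "1 + exp x \<noteq> 0" using pos[of x] by linarith
    then show ?thesis unfolding logistic_def by (simp add: divide_simps)
  qed
  define D where "D = (1 + exp a) * (1 + exp b) * (1 + exp c) * (1 + exp d)"
  have D: "D > 0" unfolding D_def using pos by (intro mult_pos_pos) auto
  have A: "logistic a * (1 - logistic b) * (1 - logistic c) * logistic d = exp a * exp d / D"
    unfolding q unfolding logistic_def D_def by simp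
  have B: "(1 - logistic a) * logistic b * logistic c * (1 - logistic d) = exp b * exp c / D"
    unfolding q unfolding logistic_def D_def by simp
  have bc: "exp b * exp c > 0" by simp
  have ad: "exp a * exp d > 0" by simp
  have "exp a * exp d / D / (exp a * exp d / D + exp b * exp c / D) = exp a * exp d / (exp a * exp d + exp b * exp c)"
    using D by (simp add: add_divide_distrib[symmetric])
  also have "\<dots> = logistic (a - b - c + d)"
    unfolding logistic_def exp_add exp_diff using bc ad
    by (simp add: field_simps)
  finally show ?thesis unfolding A B .
qed

lemma tail_prob:
  fixes \<Omega> :: "'w measure" and Y :: "'w \<Rightarrow> nat" and L :: "nat \<Rightarrow> real"
  assumes P: "prob_space \<Omega>" and meas: "Y \<in> measurable \<Omega> (count_space UNIV)"
    and rng: "\<forall>\<omega>\<in>space \<Omega>. Y \<omega> \<le> M"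
    and law: "\<forall>k\<in>{1..M}. measure \<Omega> {\<omega>\<in>space \<Omega>. Y \<omega> = k} = (if k = M then L M else L k - L (k+1))"
    and k: "1 \<le> k" "k \<le> M"
  shows "measure \<Omega> {\<omega>\<in>space \<Omega>. k \<le> Y \<omega>} = L k"
proof -
  interpret prob_space \<Omega> by fact
  have "\<forall>k. 1 \<le> k \<longrightarrow> M - k = n \<longrightarrow> k \<le> M \<longrightarrow> measure \<Omega> {\<omega>\<in>space \<Omega>. k \<le> Y \<omega>} = L k" for n
  proof (induction n)
    case 0
    show ?case
    proof (intro allI impI)
      fix k assume h: "1 \<le> k" "M - k = 0" "k \<le> M"
      then have "k = M" by simp
      have "{\<omega>\<in>space \<Omega>. k \<le> Y \<omega>} = {\<omega>\<in>space \<Omega>. Y \<omega> = M}"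
        using rng \<open>k = M\<close> by force
      then show "measure \<Omega> {\<omega>\<in>space \<Omega>. k \<le> Y \<omega>} = L k"
        using law \<open>k = M\<close> h by auto
    qed
  next
    case (Suc n)
    show ?case
    proof (intro allI impI)
      fix k assume h: "1 \<le> k" "M - k = Suc n" "k \<le> M"
      have ih: "measure \<Omega> {\<omega>\<in>space \<Omega>. Suc k \<le> Y \<omega>} = L (Suc k)"
        using Suc.IH h by auto
      have split: "{\<omega>\<in>space \<Omega>. k \<le> Y \<omega>} = {\<omega>\<in>space \<Omega>. Y \<omega> = k} \<union> {\<omega>\<in>space \<Omega>. Suc k \<le> Y \<omega>}"
        by auto
      have m1: "{\<omega>\<in>space \<Omega>. Y \<omega> = k} \<in> events" using meas by measurable
      have m2: "{\<omega>\<in>space \<Omega>. Suc k \<le> Y \<omega>} \<in> events" using meas by measurable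
      have "measure \<Omega> {\<omega>\<in>space \<Omega>. k \<le> Y \<omega>} = measure \<Omega> {\<omega>\<in>space \<Omega>. Y \<omega> = k} + measure \<Omega> {\<omega>\<in>space \<Omega>. Suc k \<le> Y \<omega>}"
        unfolding split by (rule finite_measure_Union[OF m1 m2]) auto
      also have "\<dots> = L k" using ih law h by auto
      finally show "measure \<Omega> {\<omega>\<in>space \<Omega>. k \<le> Y \<omega>} = L k" .
    qed
  qed
  then show ?thesis using k by blast
qed

theorem theorem1:
  fixes N M :: nat
    and X :: "nat \<Rightarrow> nat \<Rightarrow> real ^ 'k"
    and \<beta>0 :: "real ^ 'k"
    and lam del :: "nat \<Rightarrow> nat \<Rightarrow> real"
    and \<Omega> :: "'w measure"
    and Y :: "nat \<Rightarrow> nat \<Rightarrow> 'w \<Rightarrow> nat"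
  assumes N4: "N \<ge> 4" and M1: "M \<ge> 1"
    and ordered: "\<forall>(i,j)\<in>dyads N. \<forall>m m'. 1 \<le> m \<and> m \<le> m' \<and> m' \<le> M \<longrightarrow>
                     lam i m' + del j m' \<ge> lam i m + del j m"
    and P: "prob_space \<Omega>"
    and meas: "\<forall>(i,j)\<in>dyads N. Y i j \<in> measurable \<Omega> (count_space UNIV)"
    and range: "\<forall>(i,j)\<in>dyads N. \<forall>\<omega>\<in>space \<Omega>. Y i j \<omega> \<le> M"
    and indep: "prob_space.indep_vars \<Omega> (\<lambda>_. count_space UNIV) (\<lambda>(i,j). Y i j) (dyads N)"
    and law: "\<forall>(i,j)\<in>dyads N. \<forall>m\<in>{0..M}.
                measure \<Omega> {\<omega>\<in>space \<Omega>. Y i j \<omega> = m} = ologit_prob M (X i j \<bullet> \<beta>0) lam del i j m"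
    and nodes: "i1 \<in> {1..N}" "i2 \<in> {1..N}" "j1 \<in> {1..N}" "j2 \<in> {1..N}"
    and distinct: "distinct [i1, i2, j1, j2]"
    and m: "m \<in> {1..M}"
  shows "cond_prob \<Omega> (\<lambda>\<omega>. Zbar Y i1 i2 j1 j2 m \<omega> = 1)
                      (\<lambda>\<omega>. Zbar Y i1 i2 j1 j2 m \<omega> \<in> {-1, 1})
         = logistic (((X i1 j1 - X i1 j2) - (X i2 j1 - X i2 j2)) \<bullet> \<beta>0)"
proof -
  interpret prob_space \<Omega> by fact
  let ?z = "\<lambda>a b. X a b \<bullet> \<beta>0 - lam a m - del b m"
  define E where "E = (\<lambda>(d::nat\<times>nat) (s::bool). {\<omega>\<in>space \<Omega>. (m \<le> Y (fst d) (snd d) \<omega>) = s})"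
  have Ev: "E d s \<in> events" if "d \<in> dyads N" for d s
  proof -
    have "Y (fst d) (snd d) \<in> measurable \<Omega> (count_space UNIV)"
      using meas that by (cases d) auto
    then show ?thesis unfolding E_def by (cases d) (simp, measurable)
  qed
  have pT: "prob (E (a,b) True) = logistic (?z a b)" if "(a,b) \<in> dyads N" for a b
  proof -
    have "measure \<Omega> {\<omega>\<in>space \<Omega>. m \<le> Y a b \<omega>} = (\<lambda>k. logistic (X a b \<bullet> \<beta>0 - lam a k - del b k)) m"
    proof (rule tail_prob[OF P, where M=M])
      show "Y a b \<in> measurable \<Omega> (count_space UNIV)" using meas that by auto
      show "\<forall>\<omega>\<in>space \<Omega>. Y a b \<omega> \<le> M" using range that by auto
      show "1 \<le> m" "m \<le> M" using m by auto
      show "\<forall>k\<in>{1..M}. measure \<Omega> {\<omega>\<in>space \<Omega>. Y a b \<omega> = k} =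
        (if k = M then (\<lambda>k. logistic (X a b \<bullet> \<beta>0 - lam a k - del b k)) M
         else (\<lambda>k. logistic (X a b \<bullet> \<beta>0 - lam a k - del b k)) k - (\<lambda>k. logistic (X a b \<bullet> \<beta>0 - lam a k - del b k)) (k + 1))"
        using law that by (auto simp: ologit_prob_def)
    qed
    then show ?thesis unfolding E_def by simp
  qed
  have pF: "prob (E (a,b) False) = 1 - logistic (?z a b)" if "(a,b) \<in> dyads N" for a b
  proof -
    have "E (a,b) False = space \<Omega> - E (a,b) True" unfolding E_def by auto
    then show ?thesis using prob_compl[OF Ev[OF that, of True]] pT[OF that] by simp
  qed
  have indep_sets: "indep_sets (\<lambda>d. sigma_sets (space \<Omega>) {(\<lambda>(i,j). Y i j) d -` A \<inter> space \<Omega> | A. A \<in> sets (count_space UNIV)}) (dyads N)"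
    using indep unfolding indep_vars_def by blast
  have prodE: "prob (\<Inter>d\<in>J. E d (s d)) = (\<Prod>d\<in>J. prob (E d (s d)))"
    if J: "J \<subseteq> dyads N" "J \<noteq> {}" "finite J" for J s
  proof (rule indep_setsD[OF indep_sets J])
    show "\<forall>j\<in>J. E j (s j) \<in> sigma_sets (space \<Omega>) {(\<lambda>(i,j). Y i j) j -` A \<inter> space \<Omega> | A. A \<in> sets (count_space UNIV)}"
    proof
      fix d assume "d \<in> J"
      have eq: "E d (s d) = (\<lambda>(i,j). Y i j) d -` {k. (m \<le> k) = s d} \<inter> space \<Omega>"
        unfolding E_def by (cases d) auto
      have "E d (s d) \<in> {(\<lambda>(i,j). Y i j) d -` A \<inter> space \<Omega> | A. A \<in> sets (count_space UNIV)}"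
        apply (rule CollectI, rule exI[of _ "{k. (m \<le> k) = s d}"], rule conjI)
         apply (rule eq)
        apply simp
        done
      then show "E d (s d) \<in> sigma_sets (space \<Omega>) {(\<lambda>(i,j). Y i j) d -` A \<inter> space \<Omega> | A. A \<in> sets (count_space UNIV)}"
        by (rule sigma_sets.Basic)
    qed
  qed
  have d: "i1 \<noteq> i2" "i1 \<noteq> j1" "i1 \<noteq> j2" "i2 \<noteq> j1" "i2 \<noteq> j2" "j1 \<noteq> j2" using distinct by auto
  have dy: "(i1,j1) \<in> dyads N" "(i1,j2) \<in> dyads N" "(i2,j1) \<in> dyads N" "(i2,j2) \<in> dyads N"
    using nodes d by (auto simp: dyads_def)
  define J where "J = {(i1,j1),(i1,j2),(i2,j1),(i2,j2)}"
  have J: "J \<subseteq> dyads N" "J \<noteq> {}" "finite J" using dy unfolding J_def by auto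
  define s where "s = (\<lambda>d. d = (i1,j1) \<or> d = (i2,j2))"
  define s' where "s' = (\<lambda>d. \<not> s d)"
  have A1: "{\<omega>\<in>space \<Omega>. Zbar Y i1 i2 j1 j2 m \<omega> = 1} = (\<Inter>d\<in>J. E d (s d))"
    unfolding J_def s_def E_def Zbar_def Dind_def using d by (auto split: if_splits)
  have A2: "{\<omega>\<in>space \<Omega>. Zbar Y i1 i2 j1 j2 m \<omega> = -1} = (\<Inter>d\<in>J. E d (s' d))"
    unfolding J_def s'_def s_def E_def Zbar_def Dind_def using d by (auto split: if_splits)
  have pA1: "prob (\<Inter>d\<in>J. E d (s d)) = logistic (?z i1 j1) * (1 - logistic (?z i1 j2)) * (1 - logistic (?z i2 j1)) * logistic (?z i2 j2)"
    unfolding prodE[OF J] unfolding J_def s_def using d dy pT pF by simp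
  have pA2: "prob (\<Inter>d\<in>J. E d (s' d)) = (1 - logistic (?z i1 j1)) * logistic (?z i1 j2) * logistic (?z i2 j1) * (1 - logistic (?z i2 j2))"
    unfolding prodE[OF J] unfolding J_def s'_def s_def using d dy pT pF by simp
  have num: "\<P>(\<omega> in \<Omega>. Zbar Y i1 i2 j1 j2 m \<omega> = 1 \<and> Zbar Y i1 i2 j1 j2 m \<omega> \<in> {-1, 1}) = prob (\<Inter>d\<in>J. E d (s d))"
    unfolding A1[symmetric] by (rule arg_cong[where f=prob]) auto
  have ev1: "(\<Inter>d\<in>J. E d (s d)) \<in> events" and ev2: "(\<Inter>d\<in>J. E d (s' d)) \<in> events"
    using J Ev by (auto intro!: sets.finite_INT)
  have "{\<omega>\<in>space \<Omega>. Zbar Y i1 i2 j1 j2 m \<omega> \<in> {-1, 1}} = (\<Inter>d\<in>J. E d (s d)) \<union> (\<Inter>d\<in>J. E d (s' d))"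
    unfolding A1[symmetric] A2[symmetric] by auto
  moreover have "(\<Inter>d\<in>J. E d (s d)) \<inter> (\<Inter>d\<in>J. E d (s' d)) = {}"
    unfolding A1[symmetric] A2[symmetric] by auto
  ultimately have den: "\<P>(\<omega> in \<Omega>. Zbar Y i1 i2 j1 j2 m \<omega> \<in> {-1, 1}) = prob (\<Inter>d\<in>J. E d (s d)) + prob (\<Inter>d\<in>J. E d (s' d))"
    using finite_measure_Union[OF ev1 ev2] by simp
  have "cond_prob \<Omega> (\<lambda>\<omega>. Zbar Y i1 i2 j1 j2 m \<omega> = 1) (\<lambda>\<omega>. Zbar Y i1 i2 j1 j2 m \<omega> \<in> {-1, 1})
     = logistic (?z i1 j1 - ?z i1 j2 - ?z i2 j1 + ?z i2 j2)"
    unfolding cond_prob_def num den pA1 pA2 by (rule logistic_alg)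
  also have "?z i1 j1 - ?z i1 j2 - ?z i2 j1 + ?z i2 j2 = ((X i1 j1 - X i1 j2) - (X i2 j1 - X i2 j2)) \<bullet> \<beta>0"
    by (simp add: inner_diff_left)
  finally show ?thesis .
qed

end
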